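(* Let $S$ be a commutative semiring and $\mathcal G$ an ample groupoid. Define the relation $\equiv$ on $A_S(\mathcal G)$ by $f\equiv g$ iff $f(\alpha)=g(\alpha)$ for all $\alpha\in\mathcal G$ with $s(\alpha),r(\alpha)\in\mathcal T$. Then $\equiv$ is a congruence on $A_S(\mathcal G)$ (and it is moreover compatible with $S$-scalar multiplication).
   Context: A commutative semiring has commutative monoid addition (neutral $0$), commutative associative multiplication with $1$, distributivity and absorbing $0$. An ample groupoid is a topological groupoid whose unit space $\mathcal G^{(0)}$ is locally compact Hausdorff and totally disconnected and whose source and range maps $s,r$ are local homeomorphisms. $\mathcal T=\{u\in\mathcal G^{(0)}:\{\gamma\in\mathcal G: s(\gamma)=r(\gamma)=u\}=\{u\}\}$ is the set of units with trivial isotropy group. The Steinberg algebra $A_S(\mathcal G)$ is the set of functions $\mathcal G\to S$ of the form $\sum_{U\in F}s_U1_U$ with $F$ a finite set of compact open bisections (subsets on which $s,r$ are homeomorphisms onto their images), with pointwise addition and convolution $(f*g)(\gamma)=\sum_{\alpha\beta=\gamma}f(\alpha)g(\beta)$. A congruence on a hemiring $R$ is an equivalence relation $\sim$ such that $r\sim s$ implies $t+r\sim t+s$, $tr\sim ts$, $rt\sim st$ for all $t\in R$. *)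

theory Defs
  imports "HOL-Analysis.Analysis"
begin

text \<open>Units are identified with identity arrows, so the unit space is s ` G.\<close>
definition groupoid ::
  "'g set \<Rightarrow> ('g \<Rightarrow> 'g) \<Rightarrow> ('g \<Rightarrow> 'g) \<Rightarrow> ('g \<Rightarrow> 'g \<Rightarrow> 'g) \<Rightarrow> ('g \<Rightarrow> 'g) \<Rightarrow> bool" where
  "groupoid G s r m i \<longleftrightarrow>
     (\<forall>a\<in>G. s a \<in> G \<and> r a \<in> G \<and> i a \<in> G) \<and>
     (\<forall>a\<in>G. s (s a) = s a \<and> r (s a) = s a \<and> s (r a) = r a \<and> r (r a) = r a) \<and>
     (\<forall>a\<in>G. \<forall>b\<in>G. s a = r b \<longrightarrow> m a b \<in> G \<and> s (m a b) = s b \<and> r (m a b) = r a) \<and>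
     (\<forall>a\<in>G. \<forall>b\<in>G. \<forall>c\<in>G. s a = r b \<and> s b = r c \<longrightarrow> m (m a b) c = m a (m b c)) \<and>
     (\<forall>a\<in>G. m (r a) a = a \<and> m a (s a) = a) \<and>
     (\<forall>a\<in>G. s (i a) = r a \<and> r (i a) = s a \<and> m a (i a) = r a \<and> m (i a) a = s a)"

definition unit_space :: "'g set \<Rightarrow> ('g \<Rightarrow> 'g) \<Rightarrow> 'g set" where
  "unit_space G s = s ` G"

definition composable_pairs :: "'g set \<Rightarrow> ('g \<Rightarrow> 'g) \<Rightarrow> ('g \<Rightarrow> 'g) \<Rightarrow> ('g \<times> 'g) set" where
  "composable_pairs G s r = {(a, b). a \<in> G \<and> b \<in> G \<and> s a = r b}"

definition topological_groupoid ::
  "'g topology \<Rightarrow> 'g set \<Rightarrow> ('g \<Rightarrow> 'g) \<Rightarrow> ('g \<Rightarrow> 'g) \<Rightarrow> ('g \<Rightarrow> 'g \<Rightarrow> 'g) \<Rightarrow> ('g \<Rightarrow> 'g) \<Rightarrow> bool" where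
  "topological_groupoid X G s r m i \<longleftrightarrow>
     groupoid G s r m i \<and> topspace X = G \<and>
     continuous_map (subtopology (prod_topology X X) (composable_pairs G s r)) X
       (\<lambda>(a, b). m a b) \<and>
     continuous_map X X i"

definition totally_disconnected_space :: "'a topology \<Rightarrow> bool" where
  "totally_disconnected_space X \<longleftrightarrow>
     (\<forall>C. connectedin X C \<longrightarrow> (\<exists>x. C \<subseteq> {x}))"

definition local_homeomorphism_map :: "'a topology \<Rightarrow> 'b topology \<Rightarrow> ('a \<Rightarrow> 'b) \<Rightarrow> bool" where
  "local_homeomorphism_map X Y f \<longleftrightarrow>
     f ` topspace X \<subseteq> topspace Y \<and>
     (\<forall>x\<in>topspace X. \<exists>U. openin X U \<and> x \<in> U \<and> openin Y (f ` U) \<and>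
        homeomorphic_map (subtopology X U) (subtopology Y (f ` U)) f)"

definition ample_groupoid ::
  "'g topology \<Rightarrow> 'g set \<Rightarrow> ('g \<Rightarrow> 'g) \<Rightarrow> ('g \<Rightarrow> 'g) \<Rightarrow> ('g \<Rightarrow> 'g \<Rightarrow> 'g) \<Rightarrow> ('g \<Rightarrow> 'g) \<Rightarrow> bool" where
  "ample_groupoid X G s r m i \<longleftrightarrow>
     topological_groupoid X G s r m i \<and>
     locally_compact_space (subtopology X (unit_space G s)) \<and>
     Hausdorff_space (subtopology X (unit_space G s)) \<and>
     totally_disconnected_space (subtopology X (unit_space G s)) \<and>
     local_homeomorphism_map X (subtopology X (unit_space G s)) s \<and>
     local_homeomorphism_map X (subtopology X (unit_space G s)) r"

definition trivial_isotropy_units :: "'g set \<Rightarrow> ('g \<Rightarrow> 'g) \<Rightarrow> ('g \<Rightarrow> 'g) \<Rightarrow> 'g set" where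
  "trivial_isotropy_units G s r =
     {u \<in> unit_space G s. {\<gamma> \<in> G. s \<gamma> = u \<and> r \<gamma> = u} = {u}}"

definition bisection :: "'g topology \<Rightarrow> 'g set \<Rightarrow> ('g \<Rightarrow> 'g) \<Rightarrow> ('g \<Rightarrow> 'g) \<Rightarrow> 'g set \<Rightarrow> bool" where
  "bisection X G s r U \<longleftrightarrow> U \<subseteq> G \<and>
     homeomorphic_map (subtopology X U) (subtopology X (s ` U)) s \<and>
     homeomorphic_map (subtopology X U) (subtopology X (r ` U)) r"

definition compact_open_bisection ::
  "'g topology \<Rightarrow> 'g set \<Rightarrow> ('g \<Rightarrow> 'g) \<Rightarrow> ('g \<Rightarrow> 'g) \<Rightarrow> 'g set \<Rightarrow> bool" where
  "compact_open_bisection X G s r U \<longleftrightarrow>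
     openin X U \<and> compactin X U \<and> bisection X G s r U"

text \<open>Elements of the Steinberg algebra: functions G -> S (extended by 0 off G)
 of the form sum of c_U 1_U over a finite set F of compact open bisections.\<close>
definition steinberg_algebra ::
  "'g topology \<Rightarrow> 'g set \<Rightarrow> ('g \<Rightarrow> 'g) \<Rightarrow> ('g \<Rightarrow> 'g) \<Rightarrow> ('g \<Rightarrow> 'a::comm_semiring_1) set" where
  "steinberg_algebra X G s r =
     {f. \<exists>F c. finite F \<and> (\<forall>U\<in>F. compact_open_bisection X G s r U) \<and>
            f = (\<lambda>\<gamma>. \<Sum>U\<in>F. if \<gamma> \<in> U then c U else 0)}"

text \<open>Convolution: (f*g)(gamma) = sum over alpha beta = gamma of f(alpha) g(beta);
 terms with f(alpha) = 0 or g(beta) = 0 are dropped (they contribute 0),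
 so the sum is finite for Steinberg algebra elements.\<close>
definition convolution ::
  "'g set \<Rightarrow> ('g \<Rightarrow> 'g) \<Rightarrow> ('g \<Rightarrow> 'g) \<Rightarrow> ('g \<Rightarrow> 'g \<Rightarrow> 'g) \<Rightarrow>
   ('g \<Rightarrow> 'a::comm_semiring_1) \<Rightarrow> ('g \<Rightarrow> 'a) \<Rightarrow> 'g \<Rightarrow> 'a" where
  "convolution G s r m f g \<gamma> =
     (\<Sum>(\<alpha>, \<beta>) \<in> {(\<alpha>, \<beta>). (\<alpha>, \<beta>) \<in> composable_pairs G s r \<and> m \<alpha> \<beta> = \<gamma> \<and>
                         f \<alpha> \<noteq> 0 \<and> g \<beta> \<noteq> 0}. f \<alpha> * g \<beta>)"

definition hemiring_congruence ::
  "'b set \<Rightarrow> ('b \<Rightarrow> 'b \<Rightarrow> 'b) \<Rightarrow> ('b \<Rightarrow> 'b \<Rightarrow> 'b) \<Rightarrow> ('b \<times> 'b) set \<Rightarrow> bool" where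
  "hemiring_congruence A p t R \<longleftrightarrow> equiv A R \<and>
     (\<forall>x y z. (x, y) \<in> R \<and> z \<in> A \<longrightarrow>
        (p z x, p z y) \<in> R \<and> (t z x, t z y) \<in> R \<and> (t x z, t y z) \<in> R)"

definition trivial_isotropy_rel ::
  "'g topology \<Rightarrow> 'g set \<Rightarrow> ('g \<Rightarrow> 'g) \<Rightarrow> ('g \<Rightarrow> 'g) \<Rightarrow> (('g \<Rightarrow> 'a::comm_semiring_1) \<times> ('g \<Rightarrow> 'a)) set" where
  "trivial_isotropy_rel X G s r =
     {(f, g). f \<in> steinberg_algebra X G s r \<and> g \<in> steinberg_algebra X G s r \<and>
        (\<forall>\<alpha>\<in>G. s \<alpha> \<in> trivial_isotropy_units G s r \<and> r \<alpha> \<in> trivial_isotropy_units G s r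
                \<longrightarrow> f \<alpha> = g \<alpha>)}"

end

theory Submission
  imports Defs
begin

locale agpd =
  fixes X :: "'g topology" and G :: "'g set" and s r :: "'g \<Rightarrow> 'g"
    and m :: "'g \<Rightarrow> 'g \<Rightarrow> 'g" and i :: "'g \<Rightarrow> 'g"
  assumes amp: "ample_groupoid X G s r m i"
begin

lemma grp: "groupoid G s r m i"
  using amp by (simp add: ample_groupoid_def topological_groupoid_def)

lemma topG[simp]: "topspace X = G"
  using amp by (simp add: ample_groupoid_def topological_groupoid_def)

lemma mcont: "continuous_map (subtopology (prod_topology X X) (composable_pairs G s r)) X (\<lambda>(a, b). m a b)"
  using amp by (simp add: ample_groupoid_def topological_groupoid_def)

lemma icont: "continuous_map X X i"
  using amp by (simp add: ample_groupoid_def topological_groupoid_def)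

abbreviation "Y \<equiv> subtopology X (unit_space G s)"

lemma haus: "Hausdorff_space Y"
  using amp by (simp add: ample_groupoid_def)

lemma slh: "local_homeomorphism_map X Y s"
  using amp by (simp add: ample_groupoid_def)
lemma rlh: "local_homeomorphism_map X Y r"
  using amp by (simp add: ample_groupoid_def)

lemma G1[simp]: "a \<in> G \<Longrightarrow> s a \<in> G" "a \<in> G \<Longrightarrow> r a \<in> G" "a \<in> G \<Longrightarrow> i a \<in> G"
  using grp by (auto simp: groupoid_def)
lemma G2[simp]: "a \<in> G \<Longrightarrow> s (s a) = s a" "a \<in> G \<Longrightarrow> r (s a) = s a"
   "a \<in> G \<Longrightarrow> s (r a) = r a" "a \<in> G \<Longrightarrow> r (r a) = r a"
  using grp by (auto simp: groupoid_def)
lemma G3[simp]: "a \<in> G \<Longrightarrow> b \<in> G \<Longrightarrow> s a = r b \<Longrightarrow> m a b \<in> G"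
  "a \<in> G \<Longrightarrow> b \<in> G \<Longrightarrow> s a = r b \<Longrightarrow> s (m a b) = s b"
  "a \<in> G \<Longrightarrow> b \<in> G \<Longrightarrow> s a = r b \<Longrightarrow> r (m a b) = r a"
  using grp by (auto simp: groupoid_def)
lemma G4: "a \<in> G \<Longrightarrow> b \<in> G \<Longrightarrow> c \<in> G \<Longrightarrow> s a = r b \<Longrightarrow> s b = r c \<Longrightarrow> m (m a b) c = m a (m b c)"
  using grp by (auto simp: groupoid_def)
lemma G5[simp]: "a \<in> G \<Longrightarrow> m (r a) a = a" "a \<in> G \<Longrightarrow> m a (s a) = a"
  using grp by (auto simp: groupoid_def)
lemma G6[simp]: "a \<in> G \<Longrightarrow> s (i a) = r a" "a \<in> G \<Longrightarrow> r (i a) = s a"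
  "a \<in> G \<Longrightarrow> m a (i a) = r a" "a \<in> G \<Longrightarrow> m (i a) a = s a"
  using grp by (auto simp: groupoid_def)

lemma cancel_left: "a \<in> G \<Longrightarrow> b \<in> G \<Longrightarrow> s a = r b \<Longrightarrow> m (i a) (m a b) = b"
proof -
  assume h: "a \<in> G" "b \<in> G" "s a = r b"
  have "m (i a) (m a b) = m (m (i a) a) b" using h G4[of "i a" a b] by simp
  also have "\<dots> = b" using h by simp
  finally show ?thesis .
qed

lemma cancel_right: "a \<in> G \<Longrightarrow> b \<in> G \<Longrightarrow> s a = r b \<Longrightarrow> m (m a b) (i b) = a"
proof -
  assume h: "a \<in> G" "b \<in> G" "s a = r b"
  have "m (m a b) (i b) = m a (m b (i b))" using h G4[of a b "i b"] by simp
  also have "\<dots> = a" using h by (metis G5(2) G6(3))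
  finally show ?thesis .
qed

lemma lh_cont:
  assumes "local_homeomorphism_map X Y f"
  shows "continuous_map X Y f"
proof -
  have img: "f \<in> topspace X \<rightarrow> topspace Y" using assms by (auto simp: local_homeomorphism_map_def)
  have "openin X {x \<in> topspace X. f x \<in> W}" if W: "openin Y W" for W
  proof (subst openin_subopen, intro ballI)
    fix x assume x: "x \<in> {x \<in> topspace X. f x \<in> W}"
    then obtain U where U: "openin X U" "x \<in> U" "openin Y (f ` U)"
      "homeomorphic_map (subtopology X U) (subtopology Y (f ` U)) f"
      using assms by (auto simp: local_homeomorphism_map_def)
    then have c: "continuous_map (subtopology X U) Y f"
      using homeomorphic_imp_continuous_map continuous_map_into_fulltopology by blast
    have "openin (subtopology X U) {y \<in> topspace (subtopology X U). f y \<in> W}"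
      using c W openin_continuous_map_preimage by blast
    then have "openin X {y \<in> topspace (subtopology X U). f y \<in> W}"
      using U(1) openin_trans_full by blast
    then show "\<exists>T. openin X T \<and> x \<in> T \<and> T \<subseteq> {x \<in> topspace X. f x \<in> W}"
      using x U by (intro exI[of _ "{y \<in> topspace (subtopology X U). f y \<in> W}"]) auto
  qed
  then show ?thesis using img by (auto simp: continuous_map_def)
qed

lemma lh_open:
  assumes "local_homeomorphism_map X Y f" and V: "openin X V"
  shows "openin Y (f ` V)"
proof (subst openin_subopen, intro ballI)
  fix y assume "y \<in> f ` V"
  then obtain x where x: "x \<in> V" "y = f x" by auto
  then have xt: "x \<in> topspace X" using V openin_subset by blast
  then obtain U where U: "openin X U" "x \<in> U" "openin Y (f ` U)"
      "homeomorphic_map (subtopology X U) (subtopology Y (f ` U)) f"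
      using assms by (auto simp: local_homeomorphism_map_def)
  have "openin (subtopology X U) (V \<inter> U)"
    using V by (auto simp: openin_subtopology)
  moreover have "V \<inter> U \<subseteq> topspace (subtopology X U)"
    using V openin_subset by fastforce
  ultimately have "openin (subtopology Y (f ` U)) (f ` (V \<inter> U))"
    using homeomorphic_map_openness[OF U(4)] by blast
  then have "openin Y (f ` (V \<inter> U))" using U(3) openin_trans_full by blast
  then show "\<exists>T. openin Y T \<and> y \<in> T \<and> T \<subseteq> f ` V"
    using x U by (intro exI[of _ "f ` (V \<inter> U)"]) auto
qed

lemma s_cont: "continuous_map X Y s" using lh_cont slh .
lemma r_cont: "continuous_map X Y r" using lh_cont rlh .
lemma s_contX: "continuous_map X X s" using s_cont continuous_map_into_fulltopology by blast
lemma r_contX: "continuous_map X X r" using r_cont continuous_map_into_fulltopology by blast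

definition prd :: "'g set \<Rightarrow> 'g set \<Rightarrow> 'g set" where
  "prd U V = {m a b | a b. a \<in> U \<and> b \<in> V \<and> s a = r b}"

lemma bis_sub: "bisection X G s r U \<Longrightarrow> U \<subseteq> G"
  by (simp add: bisection_def)

lemma bis_inv_s:
  assumes "bisection X G s r U"
  obtains \<sigma> where "continuous_map (subtopology X (s`U)) (subtopology X U) \<sigma>"
    "\<And>x. x \<in> U \<Longrightarrow> \<sigma> (s x) = x" "\<And>y. y \<in> s`U \<Longrightarrow> s (\<sigma> y) = y"
proof -
  have U: "U \<subseteq> G" using assms by (simp add: bisection_def)
  then have sU: "s ` U \<subseteq> G" by auto
  obtain g where "homeomorphic_maps (subtopology X U) (subtopology X (s`U)) s g"
    using assms by (auto simp: bisection_def homeomorphic_map_maps)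
  then have "continuous_map (subtopology X (s`U)) (subtopology X U) g"
    "\<And>x. x \<in> U \<Longrightarrow> g (s x) = x" "\<And>y. y \<in> s`U \<Longrightarrow> s (g y) = y"
    using U sU unfolding homeomorphic_maps_def topspace_subtopology topG by blast+
  then show ?thesis by (rule that)
qed

lemma bis_inv_r:
  assumes "bisection X G s r U"
  obtains \<sigma> where "continuous_map (subtopology X (r`U)) (subtopology X U) \<sigma>"
    "\<And>x. x \<in> U \<Longrightarrow> \<sigma> (r x) = x" "\<And>y. y \<in> r`U \<Longrightarrow> r (\<sigma> y) = y"
proof -
  have U: "U \<subseteq> G" using assms by (simp add: bisection_def)
  then have sU: "r ` U \<subseteq> G" by auto
  obtain g where "homeomorphic_maps (subtopology X U) (subtopology X (r`U)) r g"
    using assms by (auto simp: bisection_def homeomorphic_map_maps)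
  then have "continuous_map (subtopology X (r`U)) (subtopology X U) g"
    "\<And>x. x \<in> U \<Longrightarrow> g (r x) = x" "\<And>y. y \<in> r`U \<Longrightarrow> r (g y) = y"
    using U sU unfolding homeomorphic_maps_def topspace_subtopology topG by blast+
  then show ?thesis by (rule that)
qed

lemma prd_sub: "U \<subseteq> G \<Longrightarrow> V \<subseteq> G \<Longrightarrow> prd U V \<subseteq> G"
  unfolding prd_def by (auto intro!: G3(1))

lemma prd_s_homeo:
  assumes U: "bisection X G s r U" and V: "bisection X G s r V"
  shows "homeomorphic_map (subtopology X (prd U V)) (subtopology X (s ` prd U V)) s"
proof -
  have UG: "U \<subseteq> G" and VG: "V \<subseteq> G" using U V by (auto simp: bisection_def)
  obtain \<sigma> where \<sigma>: "continuous_map (subtopology X (s`V)) (subtopology X V) \<sigma>"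
    "\<And>x. x \<in> V \<Longrightarrow> \<sigma> (s x) = x" "\<And>y. y \<in> s`V \<Longrightarrow> s (\<sigma> y) = y"
    using bis_inv_s[OF V] by blast
  obtain \<tau> where \<tau>: "continuous_map (subtopology X (s`U)) (subtopology X U) \<tau>"
    "\<And>x. x \<in> U \<Longrightarrow> \<tau> (s x) = x" "\<And>y. y \<in> s`U \<Longrightarrow> s (\<tau> y) = y"
    using bis_inv_s[OF U] by blast
  define P where "P = prd U V"
  have PG: "P \<subseteq> G" using UG VG prd_sub P_def by blast
  have sPG: "s ` P \<subseteq> G" using PG by auto
  define \<psi> where "\<psi> u = m (\<tau> (r (\<sigma> u))) (\<sigma> u)" for u
  have key: "\<psi> (s \<gamma>) = \<gamma> \<and> s \<gamma> \<in> s ` V \<and> r (\<sigma> (s \<gamma>)) \<in> s ` U" if hg: "\<gamma> \<in> P" for \<gamma>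
  proof -
    obtain a b where ab: "a \<in> U" "b \<in> V" "s a = r b" "\<gamma> = m a b"
      using hg unfolding P_def prd_def by blast
    have g: "a \<in> G" "b \<in> G" using ab UG VG by auto
    have "s \<gamma> = s b" using ab g by simp
    moreover have "\<psi> (s b) = m a b"
      using \<sigma>(2)[OF ab(2)] \<tau>(2)[OF ab(1)] ab(3) unfolding \<psi>_def by (metis)
    moreover have "r (\<sigma> (s b)) \<in> s ` U"
      using ab(1) \<sigma>(2)[OF ab(2)] ab(3) by (metis imageI)
    ultimately show ?thesis using ab by auto
  qed
  have sPV: "s ` P \<subseteq> s ` V" using key by auto
  have cs: "continuous_map (subtopology X P) (subtopology X (s ` P)) s"
    by (rule continuous_map_into_subtopology)
       (auto intro: continuous_map_from_subtopology s_contX)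
  have c1: "continuous_map (subtopology X (s ` P)) (subtopology X V) \<sigma>"
    using continuous_map_from_subtopology_mono[OF \<sigma>(1) sPV] .
  have c1X: "continuous_map (subtopology X (s ` P)) X \<sigma>"
    using c1 continuous_map_into_fulltopology by blast
  have c2: "continuous_map (subtopology X (s ` P)) (subtopology X (s ` U)) (r \<circ> \<sigma>)"
  proof (rule continuous_map_into_subtopology)
    show "continuous_map (subtopology X (s ` P)) X (r \<circ> \<sigma>)"
      using c1X r_contX continuous_map_compose by blast
    show "r \<circ> \<sigma> \<in> topspace (subtopology X (s ` P)) \<rightarrow> s ` U"
      using key by auto
  qed
  have c3: "continuous_map (subtopology X (s ` P)) X (\<tau> \<circ> (r \<circ> \<sigma>))"
    using continuous_map_compose[OF c2 \<tau>(1)] continuous_map_into_fulltopology by blast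
  have c4: "continuous_map (subtopology X (s ` P)) (subtopology (prod_topology X X) (composable_pairs G s r))
       (\<lambda>u. ((\<tau> \<circ> (r \<circ> \<sigma>)) u, \<sigma> u))"
  proof (rule continuous_map_into_subtopology)
    show "continuous_map (subtopology X (s ` P)) (prod_topology X X) (\<lambda>u. ((\<tau> \<circ> (r \<circ> \<sigma>)) u, \<sigma> u))"
      using c3 c1X by (rule continuous_map_pairedI)
    show "(\<lambda>u. ((\<tau> \<circ> (r \<circ> \<sigma>)) u, \<sigma> u)) \<in> topspace (subtopology X (s ` P)) \<rightarrow> composable_pairs G s r"
    proof
      fix u assume "u \<in> topspace (subtopology X (s ` P))"
      then obtain \<gamma> where "\<gamma> \<in> P" "u = s \<gamma>" by auto
      then obtain a b where ab: "a \<in> U" "b \<in> V" "s a = r b" "\<gamma> = m a b"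
        unfolding P_def prd_def by blast
      have g: "a \<in> G" "b \<in> G" using ab UG VG by auto
      have "u = s b" using ab g \<open>u = s \<gamma>\<close> by simp
      then have e1: "\<sigma> u = b" using \<sigma>(2)[OF ab(2)] by simp
      have e2: "\<tau> (r b) = a" using \<tau>(2)[OF ab(1)] ab(3) by metis
      show "((\<tau> \<circ> (r \<circ> \<sigma>)) u, \<sigma> u) \<in> composable_pairs G s r"
        using ab g e1 e2 by (simp add: composable_pairs_def)
    qed
  qed
  have c5: "continuous_map (subtopology X (s ` P)) X \<psi>"
  proof -
    have "continuous_map (subtopology X (s ` P)) X ((\<lambda>(a, b). m a b) \<circ> (\<lambda>u. ((\<tau> \<circ> (r \<circ> \<sigma>)) u, \<sigma> u)))"
      using continuous_map_compose[OF c4 mcont] .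
    moreover have "\<psi> = (\<lambda>u. m (\<tau> (r (\<sigma> u))) (\<sigma> u))" by (rule ext) (simp add: \<psi>_def)
    ultimately show ?thesis by (simp add: o_def cong: if_cong)
  qed
  have c6: "continuous_map (subtopology X (s ` P)) (subtopology X P) \<psi>"
    using c5 key by (intro continuous_map_into_subtopology) auto
  have "homeomorphic_maps (subtopology X P) (subtopology X (s ` P)) s \<psi>"
    unfolding homeomorphic_maps_def using cs c6 key by auto
  then show ?thesis unfolding P_def[symmetric] homeomorphic_map_maps by blast
qed

lemma bis_inj_r: "bisection X G s r U \<Longrightarrow> inj_on r U"
  using homeomorphic_imp_injective_map[of "subtopology X U" "subtopology X (r ` U)" r]
  by (auto simp: bisection_def Int_absorb1)

lemma bis_inj_s: "bisection X G s r U \<Longrightarrow> inj_on s U"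
  using homeomorphic_imp_injective_map[of "subtopology X U" "subtopology X (s ` U)" s]
  by (auto simp: bisection_def Int_absorb1)

lemma prd_open:
  assumes U: "bisection X G s r U" and V: "bisection X G s r V"
    and oU: "openin X U" and oV: "openin X V"
  shows "openin X (prd U V)"
proof -
  have UG: "U \<subseteq> G" and VG: "V \<subseteq> G" using U V by (auto simp: bisection_def)
  obtain \<rho> where \<rho>: "continuous_map (subtopology X (r`U)) (subtopology X U) \<rho>"
    "\<And>x. x \<in> U \<Longrightarrow> \<rho> (r x) = x" "\<And>y. y \<in> r`U \<Longrightarrow> r (\<rho> y) = y"
    using bis_inv_r[OF U] by blast
  have \<rho>U: "\<rho> y \<in> U" if "y \<in> r ` U" for y using that \<rho>(2) by auto
  define Op where "Op = {\<gamma> \<in> topspace X. r \<gamma> \<in> r ` U}"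
  have oO: "openin X Op"
    unfolding Op_def using r_cont lh_open[OF rlh oU] by (rule openin_continuous_map_preimage)
  define \<phi> where "\<phi> \<gamma> = m (i (\<rho> (r \<gamma>))) \<gamma>" for \<gamma>
  have c1: "continuous_map (subtopology X Op) (subtopology X (r ` U)) r"
    by (rule continuous_map_into_subtopology) (auto simp: Op_def intro: continuous_map_from_subtopology r_contX)
  have c2: "continuous_map (subtopology X Op) X (i \<circ> (\<rho> \<circ> r))"
    using continuous_map_compose[OF continuous_map_compose[OF c1 \<rho>(1)] 
        continuous_map_compose[OF continuous_map_into_fulltopology[OF continuous_map_id] icont]]
    by (simp add: o_def cong: if_cong)
  have c3: "continuous_map (subtopology X Op) X (\<lambda>x. x)"
    using continuous_map_from_subtopology[OF continuous_map_id] by (simp add: id_def)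
  have c4: "continuous_map (subtopology X Op) (subtopology (prod_topology X X) (composable_pairs G s r))
       (\<lambda>x. ((i \<circ> (\<rho> \<circ> r)) x, x))"
  proof (rule continuous_map_into_subtopology)
    show "continuous_map (subtopology X Op) (prod_topology X X) (\<lambda>x. ((i \<circ> (\<rho> \<circ> r)) x, x))"
      using c2 c3 by (rule continuous_map_pairedI)
    show "(\<lambda>x. ((i \<circ> (\<rho> \<circ> r)) x, x)) \<in> topspace (subtopology X Op) \<rightarrow> composable_pairs G s r"
    proof
      fix x assume "x \<in> topspace (subtopology X Op)"
      then have x: "x \<in> G" "r x \<in> r ` U" by (auto simp: Op_def)
      then have "\<rho> (r x) \<in> G" using \<rho>U UG by auto
      then show "((i \<circ> (\<rho> \<circ> r)) x, x) \<in> composable_pairs G s r"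
        using x \<rho>(3)[OF x(2)] by (simp add: composable_pairs_def)
    qed
  qed
  have c5: "continuous_map (subtopology X Op) X \<phi>"
  proof -
    have "continuous_map (subtopology X Op) X ((\<lambda>(a, b). m a b) \<circ> (\<lambda>x. ((i \<circ> (\<rho> \<circ> r)) x, x)))"
      using continuous_map_compose[OF c4 mcont] .
    moreover have "\<phi> = (\<lambda>x. m (i (\<rho> (r x))) x)" by (rule ext) (simp add: \<phi>_def)
    ultimately show ?thesis by (simp add: o_def cong: if_cong)
  qed
  have eq: "prd U V = {\<gamma> \<in> topspace (subtopology X Op). \<phi> \<gamma> \<in> V}"
  proof
    show "prd U V \<subseteq> {\<gamma> \<in> topspace (subtopology X Op). \<phi> \<gamma> \<in> V}"
    proof
      fix \<gamma> assume "\<gamma> \<in> prd U V"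
      then obtain a b where ab: "a \<in> U" "b \<in> V" "s a = r b" "\<gamma> = m a b"
        unfolding prd_def by blast
      have g: "a \<in> G" "b \<in> G" using ab UG VG by auto
      have rg: "r \<gamma> = r a" using ab g by simp
      have "\<phi> \<gamma> = m (i a) (m a b)" using \<rho>(2)[OF ab(1)] by (simp add: \<phi>_def rg ab(4)[symmetric])
      also have "\<dots> = b" using cancel_left g ab(3) by blast
      finally have "\<phi> \<gamma> = b" .
      then show "\<gamma> \<in> {\<gamma> \<in> topspace (subtopology X Op). \<phi> \<gamma> \<in> V}"
        using ab g rg by (auto simp: Op_def)
    qed
    show "{\<gamma> \<in> topspace (subtopology X Op). \<phi> \<gamma> \<in> V} \<subseteq> prd U V"
    proof
      fix \<gamma> assume "\<gamma> \<in> {\<gamma> \<in> topspace (subtopology X Op). \<phi> \<gamma> \<in> V}"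
      then have g: "\<gamma> \<in> G" "r \<gamma> \<in> r ` U" "\<phi> \<gamma> \<in> V" by (auto simp: Op_def)
      define a where "a = \<rho> (r \<gamma>)"
      have a: "a \<in> U" "a \<in> G" "r a = r \<gamma>" using \<rho>U[OF g(2)] UG \<rho>(3)[OF g(2)] by (auto simp: a_def)
      have ph: "\<phi> \<gamma> = m (i a) \<gamma>" by (simp add: \<phi>_def a_def)
      have c: "s (i a) = r \<gamma>" using a by simp
      have sa: "s a = r (\<phi> \<gamma>)" using a g c by (simp add: ph)
      have "m a (\<phi> \<gamma>) = m (m a (i a)) \<gamma>" unfolding ph using G4[of a "i a" \<gamma>] a g by simp
      also have "\<dots> = \<gamma>" using a(2,3) g(1) by simp
      finally have "m a (\<phi> \<gamma>) = \<gamma>" .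
      then have "\<gamma> = m a (\<phi> \<gamma>) \<and> a \<in> U \<and> \<phi> \<gamma> \<in> V \<and> s a = r (\<phi> \<gamma>)"
        using a(1) g(3) sa by simp
      then show "\<gamma> \<in> prd U V" unfolding prd_def by blast
    qed
  qed
  have "openin (subtopology X Op) (prd U V)"
    unfolding eq using c5 oV by (rule openin_continuous_map_preimage)
  then show ?thesis using oO openin_trans_full by blast
qed

lemma prd_compact:
  assumes UG: "U \<subseteq> G" and VG: "V \<subseteq> G" and cU: "compactin X U" and cV: "compactin X V"
  shows "compactin X (prd U V)"
proof -
  let ?Z = "subtopology (prod_topology X X) (U \<times> V)"
  define C where "C = {x \<in> topspace ?Z. (s \<circ> fst) x = (r \<circ> snd) x}"
  have cf: "continuous_map ?Z Y (s \<circ> fst)"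
    using continuous_map_compose[OF continuous_map_from_subtopology[OF continuous_map_fst] s_cont] .
  have cs: "continuous_map ?Z Y (r \<circ> snd)"
    using continuous_map_compose[OF continuous_map_from_subtopology[OF continuous_map_snd] r_cont] .
  have "closedin ?Z C" unfolding C_def using haus cf cs by (rule closedin_continuous_maps_eq)
  moreover have "compact_space ?Z"
  proof -
    have "compactin (prod_topology X X) (U \<times> V)" using cU cV by (simp add: compactin_Times)
    then show ?thesis by (rule compact_space_subtopology)
  qed
  ultimately have "compactin ?Z C" using closedin_compact_space by blast
  then have cC: "compactin (prod_topology X X) C" by (simp add: compactin_subtopology)
  have Csub: "C \<subseteq> composable_pairs G s r"
    using UG VG by (auto simp: C_def composable_pairs_def)
  have "compactin (subtopology (prod_topology X X) (composable_pairs G s r)) C"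
    using cC Csub by (simp add: compactin_subtopology)
  then have "compactin X ((\<lambda>(a, b). m a b) ` C)" using mcont by (rule image_compactin)
  moreover have "(\<lambda>(a, b). m a b) ` C = prd U V"
  proof
    show "(\<lambda>(a, b). m a b) ` C \<subseteq> prd U V"
    proof
      fix x assume "x \<in> (\<lambda>(a, b). m a b) ` C"
      then obtain a b where ab: "(a, b) \<in> C" "x = m a b" by auto
      then have "a \<in> U" "b \<in> V" "s a = r b" by (auto simp: C_def)
      then show "x \<in> prd U V" unfolding prd_def using ab(2) by blast
    qed
    show "prd U V \<subseteq> (\<lambda>(a, b). m a b) ` C"
    proof
      fix x assume "x \<in> prd U V"
      then obtain a b where ab: "a \<in> U" "b \<in> V" "s a = r b" "x = m a b" unfolding prd_def by blast
      then have "(a, b) \<in> C" using UG VG by (auto simp: C_def)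
      then show "x \<in> (\<lambda>(a, b). m a b) ` C" using ab(4) by (intro rev_image_eqI[of "(a, b)"]) auto
    qed
  qed
  ultimately show ?thesis by simp
qed

lemma rev: "agpd X G r s (\<lambda>a b. m b a) i"
proof -
  have us: "unit_space G r = unit_space G s"
    unfolding unit_space_def
  proof
    show "r ` G \<subseteq> s ` G"
    proof
      fix y assume "y \<in> r ` G"
      then obtain a where "a \<in> G" "y = r a" by auto
      then show "y \<in> s ` G" by (metis G1(2) G2(3) imageI)
    qed
    show "s ` G \<subseteq> r ` G"
    proof
      fix y assume "y \<in> s ` G"
      then obtain a where "a \<in> G" "y = s a" by auto
      then show "y \<in> r ` G" by (metis G1(1) G2(2) imageI)
    qed
  qed
  have g: "groupoid G r s (\<lambda>a b. m b a) i"
    unfolding groupoid_def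
  proof (intro conjI ballI impI)
    fix a b c assume "a \<in> G" "b \<in> G" "c \<in> G" "r a = s b \<and> r b = s c"
    then show "m c (m b a) = m (m c b) a" using G4[of c b a] by simp
  qed simp_all
  have cp: "continuous_map (subtopology (prod_topology X X) (composable_pairs G r s)) X (\<lambda>(a, b). m b a)"
  proof -
    have sw: "continuous_map (subtopology (prod_topology X X) (composable_pairs G r s))
              (subtopology (prod_topology X X) (composable_pairs G s r)) (\<lambda>p. (snd p, fst p))"
      by (rule continuous_map_into_subtopology)
         (auto simp: composable_pairs_def intro!: continuous_map_pairedI continuous_map_from_subtopology
             continuous_map_fst continuous_map_snd)
    show ?thesis using continuous_map_compose[OF sw mcont] by (simp add: o_def case_prod_unfold)
  qed
  have a1: "topological_groupoid X G r s (\<lambda>a b. m b a) i"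
    unfolding topological_groupoid_def using g cp icont by simp
  show ?thesis
    unfolding agpd_def ample_groupoid_def us
    using a1 amp unfolding ample_groupoid_def by blast
qed

lemma prd_cob:
  assumes U: "compact_open_bisection X G s r U" and V: "compact_open_bisection X G s r V"
  shows "compact_open_bisection X G s r (prd U V)"
proof -
  interpret rv: agpd X G r s "\<lambda>a b. m b a" i by (rule rev)
  have bU: "bisection X G s r U" and bV: "bisection X G s r V"
    using U V by (auto simp: compact_open_bisection_def)
  have UG: "U \<subseteq> G" and VG: "V \<subseteq> G" using bU bV by (auto simp: bisection_def)
  have bU': "bisection X G r s U" and bV': "bisection X G r s V"
    using bU bV by (auto simp: bisection_def)
  have pp: "rv.prd V U = prd U V" unfolding rv.prd_def prd_def
  proof (rule set_eqI, rule iffI)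
    fix x assume "x \<in> {m b a |a b. a \<in> V \<and> b \<in> U \<and> r a = s b}"
    then obtain a b where "x = m b a" "a \<in> V" "b \<in> U" "r a = s b" by blast
    then have "x = m b a \<and> b \<in> U \<and> a \<in> V \<and> s b = r a" by simp
    then show "x \<in> {m a b |a b. a \<in> U \<and> b \<in> V \<and> s a = r b}" by blast
  next
    fix x assume "x \<in> {m a b |a b. a \<in> U \<and> b \<in> V \<and> s a = r b}"
    then obtain a b where "x = m a b" "a \<in> U" "b \<in> V" "s a = r b" by blast
    then have "x = m a b \<and> b \<in> V \<and> a \<in> U \<and> r b = s a" by simp
    then show "x \<in> {m b a |a b. a \<in> V \<and> b \<in> U \<and> r a = s b}" by blast
  qed
  have "homeomorphic_map (subtopology X (prd U V)) (subtopology X (r ` prd U V)) r"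
    using rv.prd_s_homeo[OF bV' bU'] unfolding pp .
  then have "bisection X G s r (prd U V)"
    using prd_s_homeo[OF bU bV] prd_sub[OF UG VG] by (simp add: bisection_def)
  moreover have "openin X (prd U V)"
    using U V by (intro prd_open[OF bU bV]) (simp_all add: compact_open_bisection_def)
  moreover have "compactin X (prd U V)"
    using U V by (intro prd_compact[OF UG VG]) (simp_all add: compact_open_bisection_def)
  ultimately show ?thesis by (simp add: compact_open_bisection_def)
qed

lemma prd_unique:
  assumes U: "bisection X G s r U" and V: "bisection X G s r V"
    and h: "a \<in> U" "b \<in> V" "s a = r b" "a' \<in> U" "b' \<in> V" "s a' = r b'" "m a b = m a' b'"
  shows "a = a' \<and> b = b'"
proof -
  have UG: "U \<subseteq> G" and VG: "V \<subseteq> G" using U V by (auto simp: bisection_def)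
  have g: "a \<in> G" "b \<in> G" "a' \<in> G" "b' \<in> G" using h UG VG by auto
  have e1: "r (m a b) = r a" using g h(3) by simp
  have e2: "r (m a' b') = r a'" using g h(6) by simp
  have "r a = r a'" using e1 e2 h(7) by metis
  then have aa: "a = a'" using inj_onD[OF bis_inj_r[OF U] _ h(1) h(4)] by blast
  have "b = m (i a) (m a b)" using cancel_left[OF g(1,2) h(3)] by (rule sym)
  also have "\<dots> = m (i a') (m a' b')" using h(7) aa by metis
  also have "\<dots> = b'" by (rule cancel_left[OF g(3,4) h(6)])
  finally show ?thesis using aa by blast
qed

lemma fin_subsing: "(\<And>x y. x \<in> A \<Longrightarrow> y \<in> A \<Longrightarrow> x = y) \<Longrightarrow> finite A"
proof (cases "A = {}")
  case False
  assume h: "\<And>x y. x \<in> A \<Longrightarrow> y \<in> A \<Longrightarrow> x = y"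
  obtain a where "a \<in> A" using False by auto
  then have "A \<subseteq> {a}" using h by auto
  then show ?thesis using finite_subset by blast
qed simp

lemma conv_ind:
  fixes c d :: "'g set \<Rightarrow> 'a::comm_semiring_1"
  assumes F: "finite F" and H: "finite H"
    and FB: "\<forall>U\<in>F. compact_open_bisection X G s r U" and HB: "\<forall>V\<in>H. compact_open_bisection X G s r V"
  shows "convolution G s r m (\<lambda>\<gamma>. \<Sum>U\<in>F. if \<gamma> \<in> U then c U else 0)
            (\<lambda>\<gamma>. \<Sum>V\<in>H. if \<gamma> \<in> V then d V else 0) \<gamma>
       = (\<Sum>q\<in>F \<times> H. if \<gamma> \<in> prd (fst q) (snd q) then c (fst q) * d (snd q) else 0)"
proof -
  define f where "f = (\<lambda>\<gamma>. \<Sum>U\<in>F. if \<gamma> \<in> U then c U else 0)"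
  define g where "g = (\<lambda>\<gamma>. \<Sum>V\<in>H. if \<gamma> \<in> V then d V else 0)"
  have FB': "\<And>U. U \<in> F \<Longrightarrow> bisection X G s r U" using FB by (simp add: compact_open_bisection_def)
  have HB': "\<And>V. V \<in> H \<Longrightarrow> bisection X G s r V" using HB by (simp add: compact_open_bisection_def)
  define Pset where "Pset = {p \<in> composable_pairs G s r. m (fst p) (snd p) = \<gamma> \<and> fst p \<in> \<Union>F \<and> snd p \<in> \<Union>H}"
  have finP: "finite Pset"
  proof -
    have fin1: "finite {\<alpha> \<in> U. r \<alpha> = r \<gamma>}" if "U \<in> F" for U
      using bis_inj_r[OF FB'[OF that]] by (intro fin_subsing) (metis (mono_tags, lifting) inj_onD mem_Collect_eq)
    have "Pset \<subseteq> (\<lambda>\<alpha>. (\<alpha>, m (i \<alpha>) \<gamma>)) ` (\<Union>U\<in>F. {\<alpha> \<in> U. r \<alpha> = r \<gamma>})"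
    proof
      fix p assume "p \<in> Pset"
      then obtain \<alpha> \<beta> where p: "p = (\<alpha>, \<beta>)" "\<alpha> \<in> G" "\<beta> \<in> G" "s \<alpha> = r \<beta>" "m \<alpha> \<beta> = \<gamma>" "\<alpha> \<in> \<Union>F"
        by (cases p) (auto simp: Pset_def composable_pairs_def)
      have "m (i \<alpha>) \<gamma> = \<beta>" using cancel_left[OF p(2,3,4)] p(5) by simp
      moreover have "r \<alpha> = r \<gamma>" using p by auto
      moreover have "\<alpha> \<in> (\<Union>U\<in>F. {\<alpha> \<in> U. r \<alpha> = r \<gamma>})" using p(6) \<open>r \<alpha> = r \<gamma>\<close> by blast
      ultimately show "p \<in> (\<lambda>\<alpha>. (\<alpha>, m (i \<alpha>) \<gamma>)) ` (\<Union>U\<in>F. {\<alpha> \<in> U. r \<alpha> = r \<gamma>})"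
        using p(1) by (intro rev_image_eqI) auto
    qed
    moreover have "finite ((\<lambda>\<alpha>. (\<alpha>, m (i \<alpha>) \<gamma>)) ` (\<Union>U\<in>F. {\<alpha> \<in> U. r \<alpha> = r \<gamma>}))"
      using F fin1 by (intro finite_imageI finite_UN_I) auto
    ultimately show ?thesis using finite_subset by blast
  qed
  define S where "S = {(\<alpha>, \<beta>). (\<alpha>, \<beta>) \<in> composable_pairs G s r \<and> m \<alpha> \<beta> = \<gamma> \<and> f \<alpha> \<noteq> 0 \<and> g \<beta> \<noteq> 0}"
  have f0: "f \<alpha> = 0" if "\<alpha> \<notin> \<Union>F" for \<alpha> using that unfolding f_def by (intro sum.neutral) auto
  have g0: "g \<beta> = 0" if "\<beta> \<notin> \<Union>H" for \<beta> using that unfolding g_def by (intro sum.neutral) auto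
  have f1: "\<exists>U\<in>F. \<alpha> \<in> U" if "f \<alpha> \<noteq> 0" for \<alpha> using f0 that by blast
  have g1: "\<exists>V\<in>H. \<beta> \<in> V" if "g \<beta> \<noteq> 0" for \<beta> using g0 that by blast
  have SP: "S \<subseteq> Pset"
    unfolding S_def Pset_def using f1 g1 by auto
  have "convolution G s r m f g \<gamma> = (\<Sum>p\<in>S. f (fst p) * g (snd p))"
    unfolding convolution_def S_def by (simp add: case_prod_unfold)
  also have "\<dots> = (\<Sum>p\<in>Pset. f (fst p) * g (snd p))"
  proof (rule sum.mono_neutral_left[OF finP SP], rule ballI)
    fix p assume "p \<in> Pset - S"
    then have "f (fst p) = 0 \<or> g (snd p) = 0" by (cases p) (auto simp: S_def Pset_def)
    then show "f (fst p) * g (snd p) = 0" by auto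
  qed
  also have "\<dots> = (\<Sum>p\<in>Pset. \<Sum>q\<in>F \<times> H. if fst p \<in> fst q \<and> snd p \<in> snd q then c (fst q) * d (snd q) else 0)"
  proof (rule sum.cong[OF refl])
    fix p
    have "f (fst p) * g (snd p) = (\<Sum>U\<in>F. \<Sum>V\<in>H. (if fst p \<in> U then c U else 0) * (if snd p \<in> V then d V else 0))"
      unfolding f_def g_def by (rule sum_product)
    also have "\<dots> = (\<Sum>q\<in>F \<times> H. (if fst p \<in> fst q then c (fst q) else 0) * (if snd p \<in> snd q then d (snd q) else 0))"
      by (simp add: sum.cartesian_product case_prod_unfold)
    also have "\<dots> = (\<Sum>q\<in>F \<times> H. if fst p \<in> fst q \<and> snd p \<in> snd q then c (fst q) * d (snd q) else 0)"
      by (intro sum.cong) auto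
    finally show "f (fst p) * g (snd p) = (\<Sum>q\<in>F \<times> H. if fst p \<in> fst q \<and> snd p \<in> snd q then c (fst q) * d (snd q) else 0)" .
  qed
  also have "\<dots> = (\<Sum>q\<in>F \<times> H. \<Sum>p\<in>Pset. if fst p \<in> fst q \<and> snd p \<in> snd q then c (fst q) * d (snd q) else 0)"
    by (rule sum.swap)
  also have "\<dots> = (\<Sum>q\<in>F \<times> H. if \<gamma> \<in> prd (fst q) (snd q) then c (fst q) * d (snd q) else 0)"
  proof (rule sum.cong[OF refl])
    fix q assume q: "q \<in> F \<times> H"
    obtain U V where UV: "q = (U, V)" "U \<in> F" "V \<in> H" using q by auto
    have bU: "bisection X G s r U" and bV: "bisection X G s r V" using UV FB' HB' by auto
    have "(\<Sum>p\<in>Pset. if fst p \<in> fst q \<and> snd p \<in> snd q then c (fst q) * d (snd q) else 0)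
        = (\<Sum>p\<in>{p \<in> Pset. fst p \<in> U \<and> snd p \<in> V}. c U * d V)"
      unfolding UV fst_conv snd_conv by (rule sum.inter_filter[OF finP, symmetric])
    also have "\<dots> = (if \<gamma> \<in> prd U V then c U * d V else 0)"
    proof (cases "\<gamma> \<in> prd U V")
      case True
      then obtain a b where ab: "a \<in> U" "b \<in> V" "s a = r b" "\<gamma> = m a b"
        unfolding prd_def by blast
      have "a \<in> G" "b \<in> G" using ab bU bV by (auto simp: bisection_def)
      then have "{p \<in> Pset. fst p \<in> U \<and> snd p \<in> V} = {(a, b)}"
      proof (intro set_eqI iffI)
        fix p assume "p \<in> {p \<in> Pset. fst p \<in> U \<and> snd p \<in> V}"
        then have p1: "p \<in> composable_pairs G s r" "m (fst p) (snd p) = \<gamma>" "fst p \<in> U" "snd p \<in> V"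
          unfolding Pset_def by blast+
        have p2: "s (fst p) = r (snd p)" using p1(1) by (simp add: composable_pairs_def case_prod_unfold)
        have "m a b = m (fst p) (snd p)" using p1(2) ab(4) by simp
        then have "a = fst p \<and> b = snd p" using prd_unique[OF bU bV ab(1-3) p1(3) p1(4) p2] by blast
        then show "p \<in> {(a, b)}" by (cases p) simp
      next
        fix p assume "p \<in> {(a, b)}"
        then show "p \<in> {p \<in> Pset. fst p \<in> U \<and> snd p \<in> V}"
          using ab UV \<open>a \<in> G\<close> \<open>b \<in> G\<close> by (auto simp: Pset_def composable_pairs_def)
      qed
      then show ?thesis using True by simp
    next
      case False
      have E: "{p \<in> Pset. fst p \<in> U \<and> snd p \<in> V} = {}"
      proof (rule ccontr)
        assume "{p \<in> Pset. fst p \<in> U \<and> snd p \<in> V} \<noteq> {}"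
        then obtain p where p1: "p \<in> composable_pairs G s r" "m (fst p) (snd p) = \<gamma>" "fst p \<in> U" "snd p \<in> V"
          unfolding Pset_def by blast
        have p2: "s (fst p) = r (snd p)" using p1(1) by (simp add: composable_pairs_def case_prod_unfold)
        have "\<gamma> \<in> prd U V" unfolding prd_def using p1(2-4) p2 by force
        then show False using False by simp
      qed
      show ?thesis unfolding E sum.empty using False by simp
    qed
    finally show "(\<Sum>p\<in>Pset. if fst p \<in> fst q \<and> snd p \<in> snd q then c (fst q) * d (snd q) else 0)
        = (if \<gamma> \<in> prd (fst q) (snd q) then c (fst q) * d (snd q) else 0)" using UV by simp
  qed
  finally show ?thesis unfolding f_def g_def .
qed

lemma stein_sum:
  fixes a :: "'k \<Rightarrow> 'a::comm_semiring_1" and W :: "'k \<Rightarrow> 'g set"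
  assumes K: "finite K" and KB: "\<forall>k\<in>K. compact_open_bisection X G s r (W k)"
  shows "(\<lambda>\<gamma>. \<Sum>k\<in>K. if \<gamma> \<in> W k then a k else 0) \<in> steinberg_algebra X G s r"
proof -
  define c where "c U = (\<Sum>k\<in>{k. k \<in> K \<and> W k = U}. a k)" for U
  have eq: "(\<lambda>\<gamma>. \<Sum>k\<in>K. if \<gamma> \<in> W k then a k else 0) = (\<lambda>\<gamma>. \<Sum>U\<in>W ` K. if \<gamma> \<in> U then c U else 0)"
  proof
    fix \<gamma>
    have "(\<Sum>k\<in>K. if \<gamma> \<in> W k then a k else 0)
        = (\<Sum>U\<in>W ` K. \<Sum>k\<in>{k. k \<in> K \<and> W k = U}. if \<gamma> \<in> W k then a k else 0)"
      by (rule sum.image_gen[OF K])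
    also have "\<dots> = (\<Sum>U\<in>W ` K. if \<gamma> \<in> U then c U else 0)"
    proof (rule sum.cong[OF refl])
      fix U
      have "(\<Sum>k\<in>{k. k \<in> K \<and> W k = U}. if \<gamma> \<in> W k then a k else 0)
          = (\<Sum>k\<in>{k. k \<in> K \<and> W k = U}. if \<gamma> \<in> U then a k else 0)"
        by (rule sum.cong) auto
      also have "\<dots> = (if \<gamma> \<in> U then c U else 0)" by (simp add: c_def)
      finally show "(\<Sum>k\<in>{k. k \<in> K \<and> W k = U}. if \<gamma> \<in> W k then a k else 0) = (if \<gamma> \<in> U then c U else 0)" .
    qed
    finally show "(\<Sum>k\<in>K. if \<gamma> \<in> W k then a k else 0) = (\<Sum>U\<in>W ` K. if \<gamma> \<in> U then c U else 0)" .
  qed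
  have "finite (W ` K)" "\<forall>U\<in>W ` K. compact_open_bisection X G s r U" using K KB by auto
  then show ?thesis unfolding steinberg_algebra_def eq by blast
qed

lemma stein_rep:
  assumes "f \<in> steinberg_algebra X G s r"
  obtains F c where "finite F" "\<forall>U\<in>F. compact_open_bisection X G s r U"
    "f = (\<lambda>\<gamma>. \<Sum>U\<in>F. if \<gamma> \<in> U then c U else 0)"
  using assms unfolding steinberg_algebra_def by blast

lemma stein_add:
  assumes f: "f \<in> steinberg_algebra X G s r" and g: "g \<in> steinberg_algebra X G s r"
  shows "(\<lambda>x. f x + g x) \<in> steinberg_algebra X G s r"
proof -
  obtain F c where F: "finite F" "\<forall>U\<in>F. compact_open_bisection X G s r U"
    "f = (\<lambda>\<gamma>. \<Sum>U\<in>F. if \<gamma> \<in> U then c U else 0)" using stein_rep[OF f] by blast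
  obtain H d where H: "finite H" "\<forall>U\<in>H. compact_open_bisection X G s r U"
    "g = (\<lambda>\<gamma>. \<Sum>U\<in>H. if \<gamma> \<in> U then d U else 0)" using stein_rep[OF g] by blast
  have K: "finite (F <+> H)" using F H by simp
  have KB: "\<forall>k\<in>F <+> H. compact_open_bisection X G s r (case_sum (\<lambda>U. U) (\<lambda>U. U) k)" using F H by auto
  have "(\<lambda>x. f x + g x) = (\<lambda>\<gamma>. \<Sum>k\<in>F <+> H. if \<gamma> \<in> case_sum (\<lambda>U. U) (\<lambda>U. U) k then case_sum c d k else 0)"
  proof
    fix \<gamma>
    show "f \<gamma> + g \<gamma> = (\<Sum>k\<in>F <+> H. if \<gamma> \<in> case_sum (\<lambda>U. U) (\<lambda>U. U) k then case_sum c d k else 0)"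
      unfolding sum.Plus[OF F(1) H(1)] F(3) H(3) by (simp add: o_def cong: if_cong)
  qed
  then show ?thesis using stein_sum[OF K KB] by simp
qed

lemma stein_smult:
  fixes k :: "'a::comm_semiring_1"
  assumes f: "f \<in> steinberg_algebra X G s r"
  shows "(\<lambda>x. k * f x) \<in> steinberg_algebra X G s r"
proof -
  obtain F c where F: "finite F" "\<forall>U\<in>F. compact_open_bisection X G s r U"
    "f = (\<lambda>\<gamma>. \<Sum>U\<in>F. if \<gamma> \<in> U then c U else 0)" using stein_rep[OF f] by blast
  have "(\<lambda>x. k * f x) = (\<lambda>\<gamma>. \<Sum>U\<in>F. if \<gamma> \<in> (\<lambda>U. U) U then k * c U else 0)"
    unfolding F(3) by (rule ext) (simp add: sum_distrib_left if_distrib cong: if_cong)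
  then show ?thesis using stein_sum[OF F(1), of "\<lambda>U. U"] F(2) by simp
qed

lemma stein_conv:
  assumes f: "f \<in> steinberg_algebra X G s r" and g: "g \<in> steinberg_algebra X G s r"
  shows "convolution G s r m f g \<in> steinberg_algebra X G s r"
proof -
  obtain F c where F: "finite F" "\<forall>U\<in>F. compact_open_bisection X G s r U"
    "f = (\<lambda>\<gamma>. \<Sum>U\<in>F. if \<gamma> \<in> U then c U else 0)" using stein_rep[OF f] by blast
  obtain H d where H: "finite H" "\<forall>U\<in>H. compact_open_bisection X G s r U"
    "g = (\<lambda>\<gamma>. \<Sum>U\<in>H. if \<gamma> \<in> U then d U else 0)" using stein_rep[OF g] by blast
  have eq: "convolution G s r m f g = (\<lambda>\<gamma>. \<Sum>q\<in>F \<times> H. if \<gamma> \<in> prd (fst q) (snd q) then c (fst q) * d (snd q) else 0)"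
    unfolding F(3) H(3) using conv_ind[OF F(1) H(1) F(2) H(2)] by blast
  have K: "finite (F \<times> H)" using F H by simp
  have KB: "\<forall>q\<in>F \<times> H. compact_open_bisection X G s r (prd (fst q) (snd q))"
    using F(2) H(2) prd_cob by auto
  show ?thesis unfolding eq by (rule stein_sum[OF K KB])
qed

abbreviation "T \<equiv> trivial_isotropy_units G s r"

lemma T_inv_s:
  assumes b: "\<beta> \<in> G" and rT: "r \<beta> \<in> T"
  shows "s \<beta> \<in> T"
proof -
  have iso: "{\<gamma> \<in> G. s \<gamma> = r \<beta> \<and> r \<gamma> = r \<beta>} = {r \<beta>}"
    using rT by (simp add: trivial_isotropy_units_def)
  have "{\<gamma> \<in> G. s \<gamma> = s \<beta> \<and> r \<gamma> = s \<beta>} = {s \<beta>}"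
  proof (intro set_eqI iffI)
    fix \<gamma> assume "\<gamma> \<in> {\<gamma> \<in> G. s \<gamma> = s \<beta> \<and> r \<gamma> = s \<beta>}"
    then have g: "\<gamma> \<in> G" "s \<gamma> = s \<beta>" "r \<gamma> = s \<beta>" by auto
    define x where "x = m \<gamma> (i \<beta>)"
    have x: "x \<in> G" "s x = r \<beta>" "r x = s \<beta>" using g b by (simp_all add: x_def)
    define \<delta> where "\<delta> = m \<beta> x"
    have d: "\<delta> \<in> G" "s \<delta> = r \<beta>" "r \<delta> = r \<beta>" using x b by (simp_all add: \<delta>_def)
    then have "\<delta> = r \<beta>" using iso by blast
    then have "x = m (i \<beta>) (r \<beta>)" using cancel_left[OF b x(1)] x(3) by (simp add: \<delta>_def)
    also have "\<dots> = i \<beta>" using b by (metis G1(3) G5(2) G6(1))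
    finally have xi: "x = i \<beta>" .
    have "m x \<beta> = m \<gamma> (m (i \<beta>) \<beta>)" unfolding x_def using G4[of \<gamma> "i \<beta>" \<beta>] g b by simp
    also have "\<dots> = \<gamma>" using g b G5(2)[of \<gamma>] by simp
    finally have "\<gamma> = m x \<beta>" by simp
    also have "\<dots> = s \<beta>" unfolding xi using b by simp
    finally show "\<gamma> \<in> {s \<beta>}" by simp
  next
    fix \<gamma> assume "\<gamma> \<in> {s \<beta>}"
    then show "\<gamma> \<in> {\<gamma> \<in> G. s \<gamma> = s \<beta> \<and> r \<gamma> = s \<beta>}" using b by simp
  qed
  moreover have "s \<beta> \<in> unit_space G s" using b by (simp add: unit_space_def)
  ultimately show ?thesis by (simp add: trivial_isotropy_units_def)
qed

lemma T_inv_r: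
  assumes b: "\<beta> \<in> G" and sT: "s \<beta> \<in> T"
  shows "r \<beta> \<in> T"
  using T_inv_s[of "i \<beta>"] b sT by simp

end

lemma conv_cong:
  assumes "\<And>a b. (a, b) \<in> composable_pairs G s r \<Longrightarrow> m a b = \<gamma> \<Longrightarrow> f a = f' a \<and> g b = g' b"
  shows "convolution G s r m f g \<gamma> = convolution G s r m f' g' \<gamma>"
proof -
  have eqS: "{(\<alpha>, \<beta>). (\<alpha>, \<beta>) \<in> composable_pairs G s r \<and> m \<alpha> \<beta> = \<gamma> \<and> f \<alpha> \<noteq> 0 \<and> g \<beta> \<noteq> 0}
      = {(\<alpha>, \<beta>). (\<alpha>, \<beta>) \<in> composable_pairs G s r \<and> m \<alpha> \<beta> = \<gamma> \<and> f' \<alpha> \<noteq> 0 \<and> g' \<beta> \<noteq> 0}"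
    using assms by auto
  show ?thesis unfolding convolution_def eqS
    by (rule sum.cong[OF refl]) (use assms in auto)
qed

theorem lemma3p5:
  fixes X :: "'g topology" and G :: "'g set" and s r :: "'g \<Rightarrow> 'g"
    and m :: "'g \<Rightarrow> 'g \<Rightarrow> 'g" and i :: "'g \<Rightarrow> 'g"
  assumes "ample_groupoid X G s r m i"
  shows "hemiring_congruence (steinberg_algebra X G s r :: ('g \<Rightarrow> 'a::comm_semiring_1) set)
           (\<lambda>f g x. f x + g x) (convolution G s r m) (trivial_isotropy_rel X G s r)
         \<and> (\<forall>(c::'a) f g. (f, g) \<in> trivial_isotropy_rel X G s r \<longrightarrow>
              ((\<lambda>x. c * f x), (\<lambda>x. c * g x)) \<in> trivial_isotropy_rel X G s r)"
proof -
  interpret agpd X G s r m i using assms by (rule agpd.intro)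
  let ?A = "steinberg_algebra X G s r :: ('g \<Rightarrow> 'a) set"
  let ?R = "trivial_isotropy_rel X G s r :: (('g \<Rightarrow> 'a) \<times> ('g \<Rightarrow> 'a)) set"
  have Rmem: "(f, g) \<in> ?R \<longleftrightarrow> f \<in> ?A \<and> g \<in> ?A \<and>
      (\<forall>\<alpha>\<in>G. s \<alpha> \<in> T \<and> r \<alpha> \<in> T \<longrightarrow> f \<alpha> = g \<alpha>)" for f g
    by (simp add: trivial_isotropy_rel_def)
  have eqv: "equiv ?A ?R"
  proof (rule equivI)
    show "?R \<subseteq> ?A \<times> ?A"
    proof (rule subrelI)
      fix f g assume "(f, g) \<in> ?R"
      then show "(f, g) \<in> ?A \<times> ?A" by (simp add: Rmem)
    qed
    show "refl_on ?A ?R"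
    proof (rule refl_onI)
      fix f assume "f \<in> ?A"
      then show "(f, f) \<in> ?R" by (simp add: Rmem)
    qed
    show "sym ?R" by (rule symI) (auto simp: Rmem)
    show "trans ?R" by (rule transI) (auto simp: Rmem)
  qed
  have compat: "(z, x) \<in> ?R \<and> w \<in> ?A \<longrightarrow>
        ((\<lambda>t. w t + z t), (\<lambda>t. w t + x t)) \<in> ?R \<and>
        (convolution G s r m w z, convolution G s r m w x) \<in> ?R \<and>
        (convolution G s r m z w, convolution G s r m x w) \<in> ?R" for x z w
  proof (intro impI, elim conjE)
    assume zx: "(z, x) \<in> ?R" and w: "w \<in> ?A"
    have zA: "z \<in> ?A" and xA: "x \<in> ?A" and agree: "\<And>\<alpha>. \<alpha> \<in> G \<Longrightarrow> s \<alpha> \<in> T \<Longrightarrow> r \<alpha> \<in> T \<Longrightarrow> z \<alpha> = x \<alpha>"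
      using zx by (auto simp: Rmem)
    have p1: "((\<lambda>t. w t + z t), (\<lambda>t. w t + x t)) \<in> ?R"
      unfolding Rmem using stein_add[OF w zA] stein_add[OF w xA] agree by auto
    have p2: "(convolution G s r m w z, convolution G s r m w x) \<in> ?R"
    proof -
      have "convolution G s r m w z \<alpha> = convolution G s r m w x \<alpha>"
        if al: "\<alpha> \<in> G" "s \<alpha> \<in> T" "r \<alpha> \<in> T" for \<alpha>
      proof (rule conv_cong)
        fix a b assume ab: "(a, b) \<in> composable_pairs G s r" "m a b = \<alpha>"
        then have g: "a \<in> G" "b \<in> G" "s a = r b" by (auto simp: composable_pairs_def)
        have "s b = s \<alpha>" using ab(2) g by auto
        moreover have "r a = r \<alpha>" using ab(2) g by auto
        then have "s a \<in> T" using T_inv_s[OF g(1)] al by simp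
        ultimately show "w a = w a \<and> z b = x b" using agree[OF g(2)] al g(3) by simp
      qed
      then show ?thesis unfolding Rmem using stein_conv[OF w zA] stein_conv[OF w xA] by auto
    qed
    have p3: "(convolution G s r m z w, convolution G s r m x w) \<in> ?R"
    proof -
      have "convolution G s r m z w \<alpha> = convolution G s r m x w \<alpha>"
        if al: "\<alpha> \<in> G" "s \<alpha> \<in> T" "r \<alpha> \<in> T" for \<alpha>
      proof (rule conv_cong)
        fix a b assume ab: "(a, b) \<in> composable_pairs G s r" "m a b = \<alpha>"
        then have g: "a \<in> G" "b \<in> G" "s a = r b" by (auto simp: composable_pairs_def)
        have "r a = r \<alpha>" using ab(2) g by auto
        moreover have "s b = s \<alpha>" using ab(2) g by auto
        then have "r b \<in> T" using T_inv_r[OF g(2)] al by simp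
        ultimately show "z a = x a \<and> w b = w b" using agree[OF g(1)] al g(3) by simp
      qed
      then show ?thesis unfolding Rmem using stein_conv[OF zA w] stein_conv[OF xA w] by auto
    qed
    show "((\<lambda>t. w t + z t), (\<lambda>t. w t + x t)) \<in> ?R \<and>
        (convolution G s r m w z, convolution G s r m w x) \<in> ?R \<and>
        (convolution G s r m z w, convolution G s r m x w) \<in> ?R" using p1 p2 p3 by blast
  qed
  have hc: "hemiring_congruence ?A (\<lambda>f g x. f x + g x) (convolution G s r m) ?R"
    unfolding hemiring_congruence_def using eqv compat by blast
  have sc: "\<forall>(c::'a) f g. (f, g) \<in> ?R \<longrightarrow> ((\<lambda>x. c * f x), (\<lambda>x. c * g x)) \<in> ?R"
  proof (intro allI impI)
    fix c :: 'a and f g assume fg: "(f, g) \<in> ?R"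
    then show "((\<lambda>x. c * f x), (\<lambda>x. c * g x)) \<in> ?R"
      unfolding Rmem using stein_smult[of f c] stein_smult[of g c] by auto
  qed
  show ?thesis using hc sc by blast
qed

end
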